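(* Let $R$ be a commutative GPP-ring and $I$ a pure ideal of $R$. Then $R/I$ is a GPP-ring.
   Context: A commutative ring $A$ is a GPP-ring if for each $f\in A$ there exists $n\geq 1$ such that $Af^n$ is a projective $A$-module. An ideal $I$ of $R$ is pure if the canonical map $R\to R/I$ is flat; equivalently, for each $f\in I$ there exists $g\in I$ with $f(1-g)=0$. *)

theory Defs
  imports "HOL-Algebra.Algebra"
begin

definition ideal_module :: "('a, 'c) ring_scheme \<Rightarrow> 'a set \<Rightarrow> ('a, 'a) module" where
  "ideal_module R J =
     \<lparr>carrier = J, Group.monoid.mult = Group.monoid.mult R, Group.monoid.one = Group.monoid.one R, Ring.ring.zero = Ring.ring.zero R, Ring.ring.add = Ring.ring.add R,
      smult = (\<lambda>a x. a \<otimes>\<^bsub>R\<^esub> x)\<rparr>"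

text \<open>Finitely supported coefficient families indexed by the elements of M:
  the elements of the free R-module on the set carrier M.\<close>
definition free_on :: "('a, 'c) ring_scheme \<Rightarrow> ('b, 'd) ring_scheme \<Rightarrow> ('b \<Rightarrow> 'a) set" where
  "free_on R M = {\<phi>. (\<forall>m\<in>carrier M. \<phi> m \<in> carrier R) \<and> (\<forall>m. m \<notin> carrier M \<longrightarrow> \<phi> m = \<zero>\<^bsub>R\<^esub>)
                     \<and> finite {m. \<phi> m \<noteq> \<zero>\<^bsub>R\<^esub>}}"

text \<open>An R-module M is projective iff the canonical epimorphism from the free module on
  carrier M onto M, \<phi> \<mapsto> \<Sum> \<phi>(m) m, splits by an R-linear map s (i.e. M is a direct summand
  of a free module; dual basis formulation).\<close>
definition projective_module :: "('a, 'c) ring_scheme \<Rightarrow> ('a, 'b, 'd) module_scheme \<Rightarrow> bool" where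
  "projective_module R M \<longleftrightarrow> module R M \<and>
     (\<exists>s. (\<forall>x\<in>carrier M. s x \<in> free_on R M)
        \<and> (\<forall>x\<in>carrier M. \<forall>y\<in>carrier M. \<forall>m. s (x \<oplus>\<^bsub>M\<^esub> y) m = s x m \<oplus>\<^bsub>R\<^esub> s y m)
        \<and> (\<forall>a\<in>carrier R. \<forall>x\<in>carrier M. \<forall>m. s (a \<odot>\<^bsub>M\<^esub> x) m = a \<otimes>\<^bsub>R\<^esub> s x m)
        \<and> (\<forall>x\<in>carrier M. finsum M (\<lambda>m. s x m \<odot>\<^bsub>M\<^esub> m) {m. s x m \<noteq> \<zero>\<^bsub>R\<^esub>} = x))"

definition GPP_ring :: "('a, 'c) ring_scheme \<Rightarrow> bool" where
  "GPP_ring A \<longleftrightarrow> (\<forall>f\<in>carrier A. \<exists>n::nat. n \<ge> 1 \<and>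
       projective_module A (ideal_module A (PIdl\<^bsub>A\<^esub> (f [^]\<^bsub>A\<^esub> n))))"

text \<open>Pure ideal, elementwise characterization given in the paper.\<close>
definition pure_ideal :: "('a, 'c) ring_scheme \<Rightarrow> 'a set \<Rightarrow> bool" where
  "pure_ideal R I \<longleftrightarrow> ideal I R \<and>
     (\<forall>f\<in>I. \<exists>g\<in>I. f \<otimes>\<^bsub>R\<^esub> (\<one>\<^bsub>R\<^esub> \<ominus>\<^bsub>R\<^esub> g) = \<zero>\<^bsub>R\<^esub>)"

end

theory Submission
  imports Defs
begin

lemma ideal_module_simps[simp]:
  "carrier (ideal_module A J) = J"
  "Ring.ring.add (ideal_module A J) = Ring.ring.add A"
  "Ring.ring.zero (ideal_module A J) = Ring.ring.zero A"
  "Module.module.smult (ideal_module A J) = (\<lambda>a x. a \<otimes>\<^bsub>A\<^esub> x)"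
  by (simp_all add: ideal_module_def)

lemma ideal_module_is_module:
  fixes A (structure)
  assumes "cring A" "ideal J A"
  shows "module A (ideal_module A J)"
proof -
  interpret cring A by fact
  interpret ideal J A by fact
  have sub: "\<And>x. x \<in> J \<Longrightarrow> x \<in> carrier A" using a_subset by blast
  show ?thesis
  proof (rule moduleI)
    show "cring A" by fact
    show "abelian_group (ideal_module A J)"
    proof (rule abelian_groupI)
      fix x assume x: "x \<in> carrier (ideal_module A J)"
      hence "\<ominus> x \<in> J" by (simp add: a_inv_closed)
      moreover have "\<ominus> x \<oplus> x = \<zero>" using x sub by (simp add: l_neg)
      ultimately show "\<exists>y\<in>carrier (ideal_module A J). y \<oplus>\<^bsub>ideal_module A J\<^esub> x = \<zero>\<^bsub>ideal_module A J\<^esub>"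
        by auto
    next
      fix x y assume "x \<in> carrier (ideal_module A J)" "y \<in> carrier (ideal_module A J)"
      then show "x \<oplus>\<^bsub>ideal_module A J\<^esub> y \<in> carrier (ideal_module A J)" by (simp add: a_closed)
    next
      show "\<zero>\<^bsub>ideal_module A J\<^esub> \<in> carrier (ideal_module A J)" by simp
    next
      fix x y z assume "x \<in> carrier (ideal_module A J)" "y \<in> carrier (ideal_module A J)" "z \<in> carrier (ideal_module A J)"
      then show "x \<oplus>\<^bsub>ideal_module A J\<^esub> y \<oplus>\<^bsub>ideal_module A J\<^esub> z = x \<oplus>\<^bsub>ideal_module A J\<^esub> (y \<oplus>\<^bsub>ideal_module A J\<^esub> z)"
        using sub by (simp add: add.m_assoc)
    next
      fix x y assume "x \<in> carrier (ideal_module A J)" "y \<in> carrier (ideal_module A J)"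
      then show "x \<oplus>\<^bsub>ideal_module A J\<^esub> y = y \<oplus>\<^bsub>ideal_module A J\<^esub> x" using sub by (simp add: a_comm)
    next
      fix x assume "x \<in> carrier (ideal_module A J)"
      then show "\<zero>\<^bsub>ideal_module A J\<^esub> \<oplus>\<^bsub>ideal_module A J\<^esub> x = x" using sub by simp
    qed
  next
    fix a x assume "a \<in> carrier A" "x \<in> carrier (ideal_module A J)"
    then show "a \<odot>\<^bsub>ideal_module A J\<^esub> x \<in> carrier (ideal_module A J)" by (simp add: I_l_closed)
  next
    fix a b x assume "a \<in> carrier A" "b \<in> carrier A" "x \<in> carrier (ideal_module A J)"
    then show "(a \<oplus> b) \<odot>\<^bsub>ideal_module A J\<^esub> x = a \<odot>\<^bsub>ideal_module A J\<^esub> x \<oplus>\<^bsub>ideal_module A J\<^esub> b \<odot>\<^bsub>ideal_module A J\<^esub> x"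
      using sub by (simp add: l_distr)
  next
    fix a x y assume "a \<in> carrier A" "x \<in> carrier (ideal_module A J)" "y \<in> carrier (ideal_module A J)"
    then show "a \<odot>\<^bsub>ideal_module A J\<^esub> (x \<oplus>\<^bsub>ideal_module A J\<^esub> y) = a \<odot>\<^bsub>ideal_module A J\<^esub> x \<oplus>\<^bsub>ideal_module A J\<^esub> a \<odot>\<^bsub>ideal_module A J\<^esub> y"
      using sub by (simp add: r_distr)
  next
    fix a b x assume "a \<in> carrier A" "b \<in> carrier A" "x \<in> carrier (ideal_module A J)"
    then show "(a \<otimes> b) \<odot>\<^bsub>ideal_module A J\<^esub> x = a \<odot>\<^bsub>ideal_module A J\<^esub> (b \<odot>\<^bsub>ideal_module A J\<^esub> x)"
      using sub by (simp add: m_assoc)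
  next
    fix x assume "x \<in> carrier (ideal_module A J)"
    then show "\<one> \<odot>\<^bsub>ideal_module A J\<^esub> x = x" using sub by simp
  qed
qed


definition Pgood :: "('a, 'c) ring_scheme \<Rightarrow> 'a \<Rightarrow> bool" where
  "Pgood A h \<longleftrightarrow> (\<exists>t\<in>carrier A. t \<otimes>\<^bsub>A\<^esub> h = h \<and> (\<forall>a\<in>carrier A. a \<otimes>\<^bsub>A\<^esub> h = \<zero>\<^bsub>A\<^esub> \<longrightarrow> a \<otimes>\<^bsub>A\<^esub> t = \<zero>\<^bsub>A\<^esub>))"

lemma Pgood_projective:
  fixes A (structure)
  assumes cr: "cring A" and hc: "h \<in> carrier A" and P: "Pgood A h"
  shows "projective_module A (ideal_module A (PIdl h))"
proof -
  interpret cring A by fact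
  let ?M = "ideal_module A (PIdl h)"
  obtain t where tc: "t \<in> carrier A" and th: "t \<otimes> h = h"
    and ann: "\<And>a. a \<in> carrier A \<Longrightarrow> a \<otimes> h = \<zero> \<Longrightarrow> a \<otimes> t = \<zero>"
    using P unfolding Pgood_def by blast
  have idl: "ideal (PIdl h) A" using hc by (rule cgenideal_ideal)
  interpret M: module A ?M by (rule ideal_module_is_module[OF cr idl])
  define rr where "rr x = (SOME r. r \<in> carrier A \<and> x = r \<otimes> h)" for x
  have rr: "rr x \<in> carrier A \<and> x = rr x \<otimes> h" if "x \<in> PIdl h" for x
  proof -
    have "\<exists>r. r \<in> carrier A \<and> x = r \<otimes> h" using that unfolding cgenideal_def by blast
    then show ?thesis unfolding rr_def by (rule someI_ex)
  qed
  have wd: "r \<otimes> t = r' \<otimes> t" if "r \<in> carrier A" "r' \<in> carrier A" "r \<otimes> h = r' \<otimes> h" for r r'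
  proof -
    have e1: "(r \<ominus> r') \<otimes> h = r \<otimes> h \<ominus> r' \<otimes> h" using that hc by algebra
    have "(r \<ominus> r') \<otimes> h = \<zero>" unfolding e1 using that hc by (simp add: r_right_minus_eq)
    then have "(r \<ominus> r') \<otimes> t = \<zero>" using that by (intro ann) auto
    moreover have e2: "(r \<ominus> r') \<otimes> t = r \<otimes> t \<ominus> r' \<otimes> t" using that tc by algebra
    ultimately show ?thesis using that tc by (simp add: r_right_minus_eq)
  qed
  define s where "s x = (\<lambda>m. if m = h then rr x \<otimes> t else \<zero>)" for x
  have hin: "h \<in> PIdl h" using hc by (rule cgenideal_self)
  show ?thesis unfolding projective_module_def
  proof (intro conjI exI[of _ s] ballI allI)
    show "module A ?M" by (rule M.module_axioms)
  next
    fix x assume x: "x \<in> carrier ?M"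
    show "s x \<in> free_on A ?M"
      unfolding free_on_def s_def using x rr[of x] tc hin
      by (auto intro: finite_subset[of _ "{h}"])
  next
    fix x y m assume x: "x \<in> carrier ?M" and y: "y \<in> carrier ?M"
    have xy: "x \<oplus> y \<in> PIdl h" using x y idl by (simp add: ideal.I_l_closed additive_subgroup.a_closed ideal.axioms(1))
    have "rr (x \<oplus> y) \<otimes> t = (rr x \<oplus> rr y) \<otimes> t"
      using rr[OF xy] rr[of x] rr[of y] x y hc by (intro wd) (auto simp: l_distr)
    then show "s (x \<oplus>\<^bsub>?M\<^esub> y) m = s x m \<oplus> s y m"
      unfolding s_def using rr[of x] rr[of y] x y tc by (auto simp: l_distr)
  next
    fix a x m assume a: "a \<in> carrier A" and x: "x \<in> carrier ?M"
    have ax: "a \<otimes> x \<in> PIdl h" using x a idl by (simp add: ideal.I_l_closed)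
    have "rr (a \<otimes> x) \<otimes> t = (a \<otimes> rr x) \<otimes> t"
      using rr[OF ax] rr[of x] x a hc by (intro wd) (auto simp: m_assoc)
    then show "s (a \<odot>\<^bsub>?M\<^esub> x) m = a \<otimes> s x m"
      unfolding s_def using rr[of x] x a tc by (auto simp: m_assoc)
  next
    fix x assume x: "x \<in> carrier ?M"
    have rx: "rr x \<in> carrier A" "x = rr x \<otimes> h" using rr[of x] x by auto
    have xc: "x \<in> carrier A" using rx hc by (metis m_closed)
    show "finsum ?M (\<lambda>m. s x m \<odot>\<^bsub>?M\<^esub> m) {m. s x m \<noteq> \<zero>} = x"
    proof (cases "rr x \<otimes> t = \<zero>")
      case True
      have "{m. s x m \<noteq> \<zero>} = {}" unfolding s_def using True by auto
      moreover have "x = \<zero>"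
        using rx th True tc hc by (metis m_assoc l_null)
      ultimately show ?thesis by simp
    next
      case False
      have "{m. s x m \<noteq> \<zero>} = {h}" unfolding s_def using False by auto
      moreover have "(rr x \<otimes> t) \<otimes> h = x" using rx th tc hc by (simp add: m_assoc)
      moreover have "(rr x \<otimes> t) \<otimes> h \<in> PIdl h" using rx tc idl hin by (simp add: ideal.I_l_closed)
      ultimately show ?thesis using M.finsum_insert[of "{}" h "\<lambda>m. s x m \<odot>\<^bsub>?M\<^esub> m"]
        unfolding s_def using xc by simp
    qed
  qed
qed


lemma finsum_ideal_module:
  fixes A (structure)
  assumes cr: "cring A" and idl: "ideal J A" and fin: "finite S" and g: "g ` S \<subseteq> J"
  shows "finsum (ideal_module A J) g S = finsum A g S"
  using fin g
proof (induction S rule: finite_induct)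
  case empty
  interpret cring A by fact
  interpret M: module A "ideal_module A J" by (rule ideal_module_is_module[OF cr idl])
  show ?case by simp
next
  case (insert x F)
  interpret cring A by fact
  interpret ideal J A by fact
  interpret M: module A "ideal_module A J" by (rule ideal_module_is_module[OF cr idl])
  have sub: "\<And>x. x \<in> J \<Longrightarrow> x \<in> carrier A" using a_subset by blast
  have "finsum (ideal_module A J) g (insert x F) = g x \<oplus> finsum (ideal_module A J) g F"
    using insert by (subst M.finsum_insert) auto
  also have "\<dots> = g x \<oplus> finsum A g F" using insert by simp
  also have "\<dots> = finsum A g (insert x F)"
    using insert sub by (subst finsum_insert) auto
  finally show ?case .
qed

lemma projective_Pgood:
  fixes A (structure)
  assumes cr: "cring A" and hc: "h \<in> carrier A" and pr: "projective_module A (ideal_module A (PIdl h))"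
  shows "Pgood A h"
proof -
  interpret cring A by fact
  let ?M = "ideal_module A (PIdl h)"
  have idl: "ideal (PIdl h) A" using hc by (rule cgenideal_ideal)
  interpret ideal "PIdl h" A by (rule idl)
  have sub: "\<And>x. x \<in> PIdl h \<Longrightarrow> x \<in> carrier A" using a_subset by blast
  obtain s where A1: "\<forall>x\<in>carrier ?M. s x \<in> free_on A ?M"
    and A2: "\<forall>a\<in>carrier A. \<forall>x\<in>carrier ?M. \<forall>m. s (a \<odot>\<^bsub>?M\<^esub> x) m = a \<otimes> s x m"
    and A3: "\<forall>x\<in>carrier ?M. finsum ?M (\<lambda>m. s x m \<odot>\<^bsub>?M\<^esub> m) {m. s x m \<noteq> \<zero>} = x"
    using pr unfolding projective_module_def by blast
  have sfree: "\<And>x. x \<in> PIdl h \<Longrightarrow> s x \<in> free_on A ?M" using A1 by simp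
  have slin: "\<And>a x m. a \<in> carrier A \<Longrightarrow> x \<in> PIdl h \<Longrightarrow> s (a \<otimes> x) m = a \<otimes> s x m" using A2 by simp
  have ssum: "\<And>x. x \<in> PIdl h \<Longrightarrow> finsum ?M (\<lambda>m. s x m \<otimes> m) {m. s x m \<noteq> \<zero>} = x" using A3 by simp
  define rr where "rr x = (SOME r. r \<in> carrier A \<and> x = r \<otimes> h)" for x
  have rr: "rr x \<in> carrier A \<and> x = rr x \<otimes> h" if "x \<in> PIdl h" for x
  proof -
    have "\<exists>r. r \<in> carrier A \<and> x = r \<otimes> h" using that unfolding cgenideal_def by blast
    then show ?thesis unfolding rr_def by (rule someI_ex)
  qed
  have hin: "h \<in> PIdl h" using hc by (rule cgenideal_self)
  define c where "c = s h"
  define S where "S = {m. c m \<noteq> \<zero>}"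
  have cf: "c \<in> free_on A ?M" unfolding c_def by (rule sfree[OF hin])
  have finS: "finite S" using cf unfolding S_def free_on_def by simp
  have SJ: "S \<subseteq> PIdl h" using cf unfolding S_def free_on_def by auto
  have cc: "c m \<in> carrier A" for m using cf unfolding free_on_def by (cases "m \<in> PIdl h") auto
  define t where "t = finsum A (\<lambda>m. c m \<otimes> rr m) S"
  have tc: "t \<in> carrier A" unfolding t_def using cc rr SJ by (intro finsum_closed) auto
  have "h = finsum ?M (\<lambda>m. c m \<otimes> m) S"
    using ssum[OF hin] unfolding c_def S_def by simp
  also have "\<dots> = finsum A (\<lambda>m. c m \<otimes> m) S"
    using SJ cc by (intro finsum_ideal_module[OF cr idl finS]) (auto intro: I_l_closed)
  also have "\<dots> = finsum A (\<lambda>m. (c m \<otimes> rr m) \<otimes> h) S"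
    using SJ cc rr hc by (intro finsum_cong') (auto simp: m_assoc dest: sub)
  also have "\<dots> = t \<otimes> h"
    unfolding t_def using finS SJ cc rr hc by (subst finsum_ldistr) auto
  finally have th: "t \<otimes> h = h" by simp
  have ann: "a \<otimes> t = \<zero>" if a: "a \<in> carrier A" and ah: "a \<otimes> h = \<zero>" for a
  proof -
    have acm: "a \<otimes> c m = \<zero>" for m
    proof -
      have "a \<otimes> c m = s (a \<otimes> h) m" unfolding c_def using slin[OF a hin] by simp
      also have "\<dots> = s (\<zero> \<otimes> h) m" using ah hc by simp
      also have "\<dots> = \<zero> \<otimes> c m" unfolding c_def using slin[OF _ hin, of "\<zero>"] by simp
      finally show ?thesis using cc by simp
    qed
    have "a \<otimes> t = finsum A (\<lambda>m. a \<otimes> (c m \<otimes> rr m)) S"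
      unfolding t_def using finS SJ cc rr a by (subst finsum_rdistr) auto
    also have "\<dots> = finsum A (\<lambda>m. \<zero>) S"
      using SJ cc rr a acm by (intro finsum_cong') (auto simp flip: m_assoc)
    finally show ?thesis by simp
  qed
  show ?thesis unfolding Pgood_def using tc th ann by blast
qed


lemma Pgood_quot:
  fixes R (structure)
  assumes cr: "cring R" and idl: "ideal I R" and pure: "pure_ideal R I"
    and hc: "h \<in> carrier R" and P: "Pgood R h"
  shows "Pgood (R Quot I) (I +> h)"
proof -
  interpret cring R by fact
  interpret ideal I R by fact
  interpret hom: ring_hom_cring R "R Quot I" "(+>) I" by (rule rcos_ring_hom_cring[OF cr])
  obtain t where tc: "t \<in> carrier R" and th: "t \<otimes> h = h"
    and ann: "\<And>a. a \<in> carrier R \<Longrightarrow> a \<otimes> h = \<zero> \<Longrightarrow> a \<otimes> t = \<zero>"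
    using P unfolding Pgood_def by blast
  have zq: "\<zero>\<^bsub>R Quot I\<^esub> = I" unfolding FactRing_def by (simp only: ring.simps)
  have memI: "a \<in> I" if "a \<in> carrier R" "I +> a = I" for a
    using a_rcos_self[OF that(1)] that(2) by simp
  show ?thesis unfolding Pgood_def
  proof (intro bexI[of _ "I +> t"] conjI ballI impI)
    show "I +> t \<in> carrier (R Quot I)" using tc by simp
    show "(I +> t) \<otimes>\<^bsub>R Quot I\<^esub> (I +> h) = I +> h"
      using tc hc th by (simp flip: hom.hom_mult)
  next
    fix A assume A: "A \<in> carrier (R Quot I)"
      and Ah: "A \<otimes>\<^bsub>R Quot I\<^esub> (I +> h) = \<zero>\<^bsub>R Quot I\<^esub>"
    obtain a where a: "a \<in> carrier R" and Aa: "A = I +> a"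
      using A unfolding FactRing_def A_RCOSETS_def' by auto
    have "I +> (a \<otimes> h) = I" using Ah a hc unfolding Aa zq by (simp flip: hom.hom_mult)
    then have ahI: "a \<otimes> h \<in> I" using a hc by (intro memI) auto
    then obtain g where g: "g \<in> I" and gz: "(a \<otimes> h) \<otimes> (\<one> \<ominus> g) = \<zero>"
      using pure unfolding pure_ideal_def by blast
    have gc: "g \<in> carrier R" using g a_subset by blast
    have "(a \<otimes> (\<one> \<ominus> g)) \<otimes> h = (a \<otimes> h) \<otimes> (\<one> \<ominus> g)" using a gc hc by algebra
    then have "(a \<otimes> (\<one> \<ominus> g)) \<otimes> t = \<zero>" using gz a gc by (intro ann) auto
    moreover have "(a \<otimes> (\<one> \<ominus> g)) \<otimes> t = a \<otimes> t \<ominus> (a \<otimes> t) \<otimes> g" using a gc tc by algebra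
    ultimately have "a \<otimes> t = (a \<otimes> t) \<otimes> g" using a gc tc by (simp add: r_right_minus_eq)
    then have atI: "a \<otimes> t \<in> I" using g a tc by (metis I_l_closed m_closed)
    have "A \<otimes>\<^bsub>R Quot I\<^esub> (I +> t) = I +> (a \<otimes> t)" unfolding Aa using a tc by (simp flip: hom.hom_mult)
    also have "\<dots> = \<zero>\<^bsub>R Quot I\<^esub>" unfolding zq using atI by (rule a_rcos_const)
    finally show "A \<otimes>\<^bsub>R Quot I\<^esub> (I +> t) = \<zero>\<^bsub>R Quot I\<^esub>" .
  qed
qed

theorem proposition2p9:
  fixes R :: "('a, 'c) ring_scheme" and I :: "'a set"
  assumes "cring R" and "GPP_ring R" and "ideal I R" and "pure_ideal R I"
  shows "GPP_ring (R Quot I)"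
proof -
  interpret cring R by fact
  interpret ideal I R by fact
  interpret hom: ring_hom_cring R "R Quot I" "(+>\<^bsub>R\<^esub>) I" by (rule rcos_ring_hom_cring[OF assms(1)])
  have qc: "cring (R Quot I)" by (rule quotient_is_cring[OF assms(1)])
  show ?thesis unfolding GPP_ring_def
  proof
    fix F assume F: "F \<in> carrier (R Quot I)"
    obtain f where f: "f \<in> carrier R" and Ff: "F = I +>\<^bsub>R\<^esub> f"
      using F unfolding FactRing_def A_RCOSETS_def' by auto
    obtain n :: nat where n: "n \<ge> 1" and pr: "projective_module R (ideal_module R (PIdl\<^bsub>R\<^esub> (f [^]\<^bsub>R\<^esub> n)))"
      using assms(2) f unfolding GPP_ring_def by blast
    have fn: "f [^]\<^bsub>R\<^esub> n \<in> carrier R" using f by simp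
    have "Pgood R (f [^]\<^bsub>R\<^esub> n)" using projective_Pgood[OF assms(1) fn pr] .
    then have "Pgood (R Quot I) (I +>\<^bsub>R\<^esub> (f [^]\<^bsub>R\<^esub> n))"
      by (rule Pgood_quot[OF assms(1) assms(3) assms(4) fn])
    moreover have "I +>\<^bsub>R\<^esub> (f [^]\<^bsub>R\<^esub> n) = F [^]\<^bsub>R Quot I\<^esub> n" unfolding Ff using f by simp
    ultimately have "Pgood (R Quot I) (F [^]\<^bsub>R Quot I\<^esub> n)" by simp
    then have "projective_module (R Quot I) (ideal_module (R Quot I) (PIdl\<^bsub>R Quot I\<^esub> (F [^]\<^bsub>R Quot I\<^esub> n)))"
      using F by (intro Pgood_projective[OF qc]) (auto intro: monoid.nat_pow_closed cring.axioms ring.axioms qc)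
    then show "\<exists>n::nat. n \<ge> 1 \<and> projective_module (R Quot I) (ideal_module (R Quot I) (PIdl\<^bsub>R Quot I\<^esub> (F [^]\<^bsub>R Quot I\<^esub> n)))"
      using n by blast
  qed
qed

end
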